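(* Let $Q$ be an operator circuit, let $x$ be an input string, and let $T_Q(G,M)$ be the tensor circuit constructed from $Q$ and $x$ as described in the context. Then the value of $T_Q(G,M)$ equals $\|Q(x)_0\|^2$.
   Context: Let $A=\mathbb{C}^2$ with orthonormal basis $|0\rangle,|1\rangle$. Operator circuits: an operator circuit $Q$ has $n$ input qubits and $m$ output qubits, one of which is marked as the answer qubit. Its gates are arbitrary linear maps $g:A^{\otimes k}\to A^{\otimes\ell}$. For $x\in\{0,1\}^n$, $Q(x)_0$ is the projection of $Q(x)$ onto the subspace in which the answer qubit is $|0\rangle$. Adjoint gate: for a gate $g$, its adjoint $g^*$ is the linear map determined by $\langle y|g^*z\rangle=\langle gy|z\rangle$. The circuit $Q'$: first apply $Q$; then apply to the answer qubit a one-qubit gate that projects onto $|0\rangle$; then apply the circuit $Q$ flipped upside down, with every gate $g$ replaced by $g^*$. So $Q'$ maps $n$ qubits to $n$ qubits. Tensor circuits: for a finite graph $G$, a labeling is a map $l:E(G)\to\{0,1\}$. For a vertex $v$, let $G_v$ be the star of $v$, i.e. the subgraph consisting of $v$, its incident edges and their endpoints. A tensor at $v$ is a map $m_v$ from labelings of the edges of $G_v$ to $\mathbb{C}$. A tensor circuit $(G,M)$ is a graph $G$ with a tensor $m_v$ at every vertex. Its value is $$\sum_{l:E(G)\to\{0,1\}}\ \prod_{v\in V(G)} m_v(l|_{E(G_v)}).$$ For a set $E$ of edges and a labeling $l$, $\alpha^{l(E)}$ denotes the basis vector $\bigotimes_{e\in E}|l(e)\rangle$ of $A^{\otimes E}$.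 Construction of $T_Q(G,M)$: $G$ is the graph of $Q'$. It has one vertex for each gate of $Q'$ (including the projection gate), one degree-1 vertex for each of the $n$ input qubits, one degree-1 vertex for each of the $n$ output qubits, and one edge for each wire. The tensors are as follows. - For a vertex $v$ of a gate $g$ with input-wire edges $E_1$ and output-wire edges $E_2$: $m_v(l)$ is the coefficient of $\alpha^{l(E_2)}$ in $g(\alpha^{l(E_1)})$. - For the vertex of the projection gate, whose two edges carry labels $a,b$: $m_v(0,0)=1$, and $m_v(a,b)=0$ otherwise. - For the vertex of the $i$-th input qubit and for the vertex of the $i$-th output qubit of $Q'$: $m_v(x_i)=1$ and $m_v(1-x_i)=0$. *)

theory Defs
  imports Complex_Main "HOL-Library.FuncSet"
begin

text \<open>A gate consumes its input wires
 (gin, in order) and creates fresh output wires (gout, in order).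
 gmat g ys xs is the coefficient of the basis vector alpha^ys in g(alpha^xs),
 for xs of length (length (gin g)) and ys of length (length (gout g));
 this determines an arbitrary linear map A^{\<otimes>k} \<rightarrow> A^{\<otimes>l}.
 Basis label True stands for |1>, False for |0>.\<close>

record gate =
  gin  :: "nat list"
  gout :: "nat list"
  gmat :: "bool list \<Rightarrow> bool list \<Rightarrow> complex"

record opcirc =
  cin    :: "nat list"
  cgates :: "gate list"
  cout   :: "nat list"
  cans   :: nat

fun wf_gates :: "nat set \<Rightarrow> nat set \<Rightarrow> gate list \<Rightarrow> nat set \<Rightarrow> bool" where
  "wf_gates live used [] fin = (live = fin)"
| "wf_gates live used (g # gs) fin =
     (distinct (gin g) \<and> set (gin g) \<subseteq> live \<and> distinct (gout g) \<and>
      set (gout g) \<inter> used = {} \<and>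
      wf_gates (live - set (gin g) \<union> set (gout g)) (used \<union> set (gout g)) gs fin)"

definition wf_circ :: "opcirc \<Rightarrow> bool" where
  "wf_circ Q \<longleftrightarrow> distinct (cin Q) \<and> distinct (cout Q) \<and> cans Q \<in> set (cout Q) \<and>
     wf_gates (set (cin Q)) (set (cin Q)) (cgates Q) (set (cout Q))"

definition upds :: "(nat \<Rightarrow> bool) \<Rightarrow> nat list \<Rightarrow> bool list \<Rightarrow> (nat \<Rightarrow> bool)" where
  "upds f ws bs = fold (\<lambda>(w, b) h. h(w := b)) (zip ws bs) f"

text \<open>A state on a finite set S of live wires is a function psi on wire labellings;
 the coefficient of the basis vector given by the labelling l (with l w = False
 for all w outside S) is psi l.\<close>

definition apply_gate :: "gate \<Rightarrow> ((nat \<Rightarrow> bool) \<Rightarrow> complex) \<Rightarrow> ((nat \<Rightarrow> bool) \<Rightarrow> complex)" where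
  "apply_gate g psi = (\<lambda>l.
     \<Sum>xs\<in>{xs. length xs = length (gin g)}.
        gmat g (map l (gout g)) xs *
        psi (upds (upds l (gout g) (replicate (length (gout g)) False)) (gin g) xs))"

definition init_state :: "opcirc \<Rightarrow> bool list \<Rightarrow> ((nat \<Rightarrow> bool) \<Rightarrow> complex)" where
  "init_state Q x = (\<lambda>l. if l = upds (\<lambda>_. False) (cin Q) x then 1 else 0)"

text \<open>Q(x), as a state on the output wires.\<close>
definition run_circ :: "opcirc \<Rightarrow> bool list \<Rightarrow> ((nat \<Rightarrow> bool) \<Rightarrow> complex)" where
  "run_circ Q x = fold apply_gate (cgates Q) (init_state Q x)"

text \<open>The squared norm of Q(x)_0, the projection of Q(x) onto the subspace where
 the answer qubit is |0> (orthonormal basis alpha^bs).\<close>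
definition proj0_norm_sq :: "opcirc \<Rightarrow> bool list \<Rightarrow> real" where
  "proj0_norm_sq Q x =
     (\<Sum>bs\<in>{bs. length bs = length (cout Q)}.
        if upds (\<lambda>_. False) (cout Q) bs (cans Q) then 0
        else (cmod (run_circ Q x (upds (\<lambda>_. False) (cout Q) bs)))\<^sup>2)"

text \<open>A tensor circuit: vertices, edges, for each vertex the (ordered) list of the
 edges of its star, and the tensor at each vertex as a function of the labels
 of those edges.\<close>

record ('v, 'e) tcirc =
  tverts :: "'v set"
  tedges :: "'e set"
  tinc   :: "'v \<Rightarrow> 'e list"
  tten   :: "'v \<Rightarrow> bool list \<Rightarrow> complex"

definition tc_value :: "('v, 'e) tcirc \<Rightarrow> complex" where
  "tc_value T = (\<Sum>l\<in>PiE (tedges T) (\<lambda>_. UNIV).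
                    \<Prod>v\<in>tverts T. tten T v (map l (tinc T v)))"

text \<open>Vertices of the graph of Q': gate vertices (GateV False j is gate j of Q,
 GateV True j is its adjoint in the flipped copy), the projection gate,
 the input-qubit vertices and the output-qubit vertices.
 Edges (wires of Q'): (False, w) is wire w of the first copy of Q; (True, w) is
 wire w of the flipped copy. Non-answer output wires of Q are shared by both
 copies; the answer wire is split by the projection gate.\<close>

datatype tvert = GateV bool nat | ProjV | InV nat | OutV nat

definition all_wires :: "opcirc \<Rightarrow> nat set" where
  "all_wires Q = set (cin Q) \<union> (\<Union>g\<in>set (cgates Q). set (gout g))"

definition e2 :: "opcirc \<Rightarrow> nat \<Rightarrow> bool \<times> nat" where
  "e2 Q w = (if w \<in> set (cout Q) \<and> w \<noteq> cans Q then (False, w) else (True, w))"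

definition TQ :: "opcirc \<Rightarrow> bool list \<Rightarrow> (tvert, bool \<times> nat) tcirc" where
  "TQ Q x = \<lparr>
     tverts = {GateV c j | c j. j < length (cgates Q)} \<union> {ProjV}
              \<union> {InV i | i. i < length (cin Q)} \<union> {OutV i | i. i < length (cin Q)},
     tedges = (\<lambda>w. (False, w)) ` all_wires Q \<union> e2 Q ` all_wires Q,
     tinc = (\<lambda>v. case v of
         GateV False j \<Rightarrow> map (\<lambda>w. (False, w)) (gin (cgates Q ! j))
                          @ map (\<lambda>w. (False, w)) (gout (cgates Q ! j))
       | GateV True j \<Rightarrow> map (e2 Q) (gout (cgates Q ! j)) @ map (e2 Q) (gin (cgates Q ! j))
       | ProjV \<Rightarrow> [(False, cans Q), (True, cans Q)]
       | InV i \<Rightarrow> [(False, cin Q ! i)]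
       | OutV i \<Rightarrow> [e2 Q (cin Q ! i)]),
     tten = (\<lambda>v ls. case v of
         GateV False j \<Rightarrow>
           (let g = cgates Q ! j; k = length (gin g)
            in gmat g (drop k ls) (take k ls))
       | GateV True j \<Rightarrow>
           \<comment> \<open>coefficient of alpha^b in g*(alpha^a) = <alpha^b|g* alpha^a> = conj(coefficient of alpha^a in g(alpha^b))\<close>
           (let g = cgates Q ! j; k = length (gout g)
            in cnj (gmat g (take k ls) (drop k ls)))
       | ProjV \<Rightarrow> (if ls = [False, False] then 1 else 0)
       | InV i \<Rightarrow> (if ls = [x ! i] then 1 else 0)
       | OutV i \<Rightarrow> (if ls = [x ! i] then 1 else 0)) \<rparr>"

end

theory Submission
  imports Defs
begin


definition Lab :: "nat set \<Rightarrow> (nat \<Rightarrow> bool) set" where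
  "Lab I = {m. \<forall>w. w \<notin> I \<longrightarrow> \<not> m w}"

definition merge :: "nat set \<Rightarrow> (nat \<Rightarrow> bool) \<Rightarrow> (nat \<Rightarrow> bool) \<Rightarrow> nat \<Rightarrow> bool" where
  "merge I m l = (\<lambda>w. if w \<in> I then m w else l w)"

lemma finite_Lab: "finite I \<Longrightarrow> finite (Lab I)"
proof -
  assume "finite I"
  have "Lab I \<subseteq> (\<lambda>S w. w \<in> S) ` Pow I"
  proof
    fix m assume "m \<in> Lab I"
    then have "m = (\<lambda>w. w \<in> {w. m w})" "{w. m w} \<subseteq> I" by (auto simp: Lab_def)
    then show "m \<in> (\<lambda>S w. w \<in> S) ` Pow I" by blast
  qed
  then show ?thesis using \<open>finite I\<close> by (meson finite_Pow_iff finite_imageI finite_subset)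
qed

lemma sumLab_Un:
  assumes "finite I" "finite J" "I \<inter> J = {}"
  shows "(\<Sum>m\<in>Lab (I \<union> J). f m) = (\<Sum>m1\<in>Lab I. \<Sum>m2\<in>Lab J. f (merge I m1 m2))"
proof -
  have bij: "bij_betw (\<lambda>(m1, m2). merge I m1 m2) (Lab I \<times> Lab J) (Lab (I \<union> J))"
  proof (rule bij_betwI')
    fix a b assume "a \<in> Lab I \<times> Lab J" "b \<in> Lab I \<times> Lab J"
    then show "((case a of (m1, m2) \<Rightarrow> merge I m1 m2) = (case b of (m1, m2) \<Rightarrow> merge I m1 m2)) = (a = b)"
      using assms(3) unfolding Lab_def merge_def
      by (cases a; cases b; auto simp: fun_eq_iff)
  next
    fix a assume "a \<in> Lab I \<times> Lab J"
    then show "(case a of (m1, m2) \<Rightarrow> merge I m1 m2) \<in> Lab (I \<union> J)"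
      by (cases a) (auto simp: Lab_def merge_def)
  next
    fix m assume "m \<in> Lab (I \<union> J)"
    then show "\<exists>a\<in>Lab I \<times> Lab J. m = (case a of (m1, m2) \<Rightarrow> merge I m1 m2)"
      by (intro bexI[of _ "(\<lambda>w. w \<in> I \<and> m w, \<lambda>w. w \<in> J \<and> m w)"])
         (auto simp: Lab_def merge_def fun_eq_iff)
  qed
  have "(\<Sum>m1\<in>Lab I. \<Sum>m2\<in>Lab J. f (merge I m1 m2)) = (\<Sum>p\<in>Lab I \<times> Lab J. f (case p of (m1, m2) \<Rightarrow> merge I m1 m2))"
    unfolding sum.cartesian_product by (rule sum.cong) auto
  also have "\<dots> = (\<Sum>m\<in>Lab (I \<union> J). f m)"
    by (rule sum.reindex_bij_betw[OF bij])
  finally show ?thesis by simp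
qed

lemma Lab_single: "Lab {a} = {\<lambda>_. False, (\<lambda>_. False)(a := True)}"
  by (auto simp: Lab_def fun_eq_iff)

lemma sumLab_single: "(\<Sum>m\<in>Lab {a}. f m) = f (\<lambda>_. False) + f ((\<lambda>_. False)(a := True))"
proof -
  have "(\<lambda>_. False) \<noteq> ((\<lambda>_. False)(a := True))" by (auto simp: fun_eq_iff)
  then show ?thesis by (simp add: Lab_single)
qed

lemma Lab_empty: "Lab {} = {\<lambda>_. False}"
  by (auto simp: Lab_def)

lemma sum_lists_Lab:
  "distinct ws \<Longrightarrow> (\<Sum>xs\<in>{xs. length xs = length ws}. h xs) = (\<Sum>m\<in>Lab (set ws). h (map m ws))"
proof (induction ws arbitrary: h)
  case Nil
  then show ?case by (simp add: Lab_empty)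
next
  case (Cons w ws)
  let ?A = "{xs :: bool list. length xs = length ws}"
  have finA: "finite ?A" using finite_lists_length_eq[of "UNIV :: bool set" "length ws"] by simp
  have eq: "{xs :: bool list. length xs = length (w # ws)} = Cons False ` ?A \<union> Cons True ` ?A"
    by (auto simp: length_Suc_conv)
  have "(\<Sum>xs\<in>{xs. length xs = length (w # ws)}. h xs) = (\<Sum>xs\<in>Cons False ` ?A. h xs) + (\<Sum>xs\<in>Cons True ` ?A. h xs)"
    unfolding eq by (rule sum.union_disjoint) (use finA in auto)
  also have "\<dots> = (\<Sum>xs\<in>?A. h (False # xs)) + (\<Sum>xs\<in>?A. h (True # xs))"
    by (simp add: sum.reindex)
  also have "\<dots> = (\<Sum>m\<in>Lab (set ws). h (False # map m ws)) + (\<Sum>m\<in>Lab (set ws). h (True # map m ws))"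
    using Cons by simp
  also have "\<dots> = (\<Sum>m\<in>Lab (set (w # ws)). h (map m (w # ws)))"
  proof -
    have "(\<Sum>m\<in>Lab (set (w # ws)). h (map m (w # ws))) = (\<Sum>m\<in>Lab ({w} \<union> set ws). h (map m (w # ws)))"
      by simp
    also have "\<dots> = (\<Sum>m1\<in>Lab {w}. \<Sum>m2\<in>Lab (set ws). h (map (merge {w} m1 m2) (w # ws)))"
      using Cons.prems by (intro sumLab_Un) auto
    also have "\<dots> = (\<Sum>m2\<in>Lab (set ws). h (False # map m2 ws)) + (\<Sum>m2\<in>Lab (set ws). h (True # map m2 ws))"
    proof -
      have e: "map (merge {w} m1 m2) (w # ws) = m1 w # map m2 ws" for m1 m2
        using Cons.prems by (auto simp: merge_def)
      show ?thesis by (simp only: e sumLab_single) simp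
    qed
    finally show ?thesis by simp
  qed
  finally show ?case .
qed

lemma upds_Cons: "upds f (w # ws) (b # bs) = upds (f(w := b)) ws bs"
  by (simp add: upds_def)

lemma upds_map: "distinct ws \<Longrightarrow> upds f ws (map m ws) = merge (set ws) m f"
proof (induction ws arbitrary: f)
  case Nil
  then show ?case by (simp add: upds_def merge_def)
next
  case (Cons w ws)
  then show ?case by (auto simp: upds_Cons merge_def fun_eq_iff)
qed

lemma list_as_map: "distinct ws \<Longrightarrow> length bs = length ws \<Longrightarrow> \<exists>m. bs = map m ws"
proof (induction ws arbitrary: bs)
  case Nil
  then show ?case by simp
next
  case (Cons w ws)
  then obtain b bs' where bs: "bs = b # bs'" by (cases bs) auto
  with Cons obtain m where "bs' = map m ws" by auto
  then have "bs = map (m(w := b)) (w # ws)" using Cons.prems bs by simp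
  then show ?case by blast
qed

definition Cw :: "gate list \<Rightarrow> nat set" where
  "Cw gs = (\<Union>g\<in>set gs. set (gout g))"

definition gprod :: "gate list \<Rightarrow> (nat \<Rightarrow> bool) \<Rightarrow> complex" where
  "gprod gs c = prod_list (map (\<lambda>g. gmat g (map c (gout g)) (map c (gin g))) gs)"

lemma gprod_cong:
  assumes h: "\<And>g w. g \<in> set gs \<Longrightarrow> w \<in> set (gin g) \<union> set (gout g) \<Longrightarrow> c w = c' w"
  shows "gprod gs c = gprod gs c'"
proof -
  have "map (\<lambda>g. gmat g (map c (gout g)) (map c (gin g))) gs = map (\<lambda>g. gmat g (map c' (gout g)) (map c' (gin g))) gs"
  proof (rule map_cong[OF refl])
    fix g assume g: "g \<in> set gs"
    have e: "map c (gout g) = map c' (gout g)" "map c (gin g) = map c' (gin g)"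
      using h[OF g] by (auto simp: map_eq_conv)
    show "gmat g (map c (gout g)) (map c (gin g)) = gmat g (map c' (gout g)) (map c' (gin g))" by (simp only: e)
  qed
  then show ?thesis unfolding gprod_def by (simp only:)
qed

lemma wf_facts:
  "wf_gates L U gs F \<Longrightarrow> L \<subseteq> U \<Longrightarrow>
     Cw gs \<inter> U = {} \<and> F \<subseteq> L \<union> Cw gs \<and> (\<forall>g\<in>set gs. set (gin g) \<subseteq> L \<union> Cw gs)"
proof (induction gs arbitrary: L U)
  case Nil
  then show ?case by (simp add: Cw_def)
next
  case (Cons g gs)
  have p: "distinct (gin g)" "set (gin g) \<subseteq> L" "set (gout g) \<inter> U = {}"
     "wf_gates (L - set (gin g) \<union> set (gout g)) (U \<union> set (gout g)) gs F"
    using Cons.prems(1) by auto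
  have "L - set (gin g) \<union> set (gout g) \<subseteq> U \<union> set (gout g)" using Cons.prems(2) by blast
  with Cons.IH[OF p(4)] have IH: "Cw gs \<inter> (U \<union> set (gout g)) = {}" "F \<subseteq> (L - set (gin g) \<union> set (gout g)) \<union> Cw gs"
     "\<forall>h\<in>set gs. set (gin h) \<subseteq> (L - set (gin g) \<union> set (gout g)) \<union> Cw gs"
    by blast+
  have CC: "Cw (g # gs) = set (gout g) \<union> Cw gs" by (simp add: Cw_def)
  show ?case unfolding CC using IH p(2,3) by auto
qed

lemma apply_gate_Lab:
  assumes "distinct (gin g)" "distinct (gout g)"
  shows "apply_gate g psi l = (\<Sum>m1\<in>Lab (set (gin g)). gmat g (map l (gout g)) (map m1 (gin g)) *
            psi (merge (set (gin g)) m1 (merge (set (gout g)) (\<lambda>_. False) l)))"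
proof -
  have r: "replicate (length (gout g)) False = map (\<lambda>_. False) (gout g)" by (simp add: map_replicate_const)
  show ?thesis
    unfolding apply_gate_def
    by (subst sum_lists_Lab[OF assms(1)]) (simp add: r upds_map assms)
qed

lemma path_sum:
  assumes "wf_gates L U gs F" "L \<subseteq> U" "finite L"
  shows "fold apply_gate gs psi l =
    (\<Sum>m\<in>Lab ((L \<union> Cw gs) - F). gprod gs (merge ((L \<union> Cw gs) - F) m l) *
        psi (\<lambda>w. if w \<in> Cw gs then False else merge ((L \<union> Cw gs) - F) m l w))"
  using assms
proof (induction gs arbitrary: L U psi)
  case Nil
  then show ?case by (simp add: Cw_def Lab_empty gprod_def merge_def)
next
  case (Cons g gs)
  define Gi where "Gi = set (gin g)"
  define Go where "Go = set (gout g)"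
  define L' where "L' = L - Gi \<union> Go"
  define U' where "U' = U \<union> Go"
  define C' where "C' = Cw gs"
  define I' where "I' = (L' \<union> C') - F"
  define I where "I = (L \<union> Cw (g # gs)) - F"
  have wf': "wf_gates L' U' gs F" and dgi: "distinct (gin g)" and dgo: "distinct (gout g)"
    and GiL: "Gi \<subseteq> L" and GoU: "Go \<inter> U = {}"
    using Cons.prems by (auto simp: L'_def U'_def Gi_def Go_def)
  have L'U': "L' \<subseteq> U'" and finL': "finite L'" using Cons.prems by (auto simp: L'_def U'_def Go_def)
  from wf_facts[OF wf' L'U'] have C'U': "C' \<inter> U' = {}" and FL': "F \<subseteq> L' \<union> C'"
    and ginL': "\<forall>h\<in>set gs. set (gin h) \<subseteq> L' \<union> C'" by (auto simp: C'_def)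
  have finI': "finite I'" and finGi: "finite Gi" using finL' by (auto simp: I'_def C'_def Cw_def Gi_def)
  have GiF: "Gi \<inter> F = {}" and GiC0: "Gi \<inter> C' = {}" and GiGo: "Gi \<inter> Go = {}"
    using GiL GoU C'U' FL' Cons.prems(2) unfolding L'_def U'_def by blast+
  have IU: "I = I' \<union> Gi" and dis: "I' \<inter> Gi = {}"
    using GiL GiF GiC0 GiGo
    by (auto simp: I_def I'_def L'_def U'_def C'_def Go_def Cw_def)
  have CC: "Cw (g # gs) = Go \<union> C'" by (simp add: Cw_def Go_def C'_def)
  have "fold apply_gate (g # gs) psi l = fold apply_gate gs (apply_gate g psi) l" by simp
  also have "\<dots> = (\<Sum>m\<in>Lab I'. gprod gs (merge I' m l) *
        apply_gate g psi (\<lambda>w. if w \<in> C' then False else merge I' m l w))"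
    using Cons.IH[OF wf' L'U' finL'] by (simp add: I'_def C'_def)
  also have "\<dots> = (\<Sum>m\<in>Lab I'. \<Sum>m1\<in>Lab Gi. gprod gs (merge I' m l) *
      (gmat g (map (\<lambda>w. if w \<in> C' then False else merge I' m l w) (gout g)) (map m1 (gin g)) *
       psi (merge Gi m1 (merge Go (\<lambda>_. False) (\<lambda>w. if w \<in> C' then False else merge I' m l w)))))"
    by (simp add: apply_gate_Lab[OF dgi dgo] sum_distrib_left Gi_def Go_def)
  also have "\<dots> = (\<Sum>m\<in>Lab I'. \<Sum>m1\<in>Lab Gi. gprod (g # gs) (merge I (merge I' m m1) l) *
        psi (\<lambda>w. if w \<in> Cw (g # gs) then False else merge I (merge I' m m1) l w))"
  proof (intro sum.cong refl)
    fix m m1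
    let ?M = "merge I (merge I' m m1) l"
    have GiC: "Gi \<inter> C' = {}" "Gi \<inter> Go = {}" "Go \<inter> C' = {}"
      using GiL GoU C'U' Cons.prems(2) by (auto simp: U'_def)
    have 1: "gprod gs ?M = gprod gs (merge I' m l)"
    proof (rule gprod_cong)
      fix h w assume "h \<in> set gs" "w \<in> set (gin h) \<union> set (gout h)"
      then have "w \<in> L' \<union> C'" using ginL' by (auto simp: C'_def Cw_def)
      then have "w \<notin> Gi" using GiC unfolding L'_def by blast
      then show "?M w = merge I' m l w" using IU by (auto simp: merge_def)
    qed
    have 2: "map ?M (gout g) = map (\<lambda>w. if w \<in> C' then False else merge I' m l w) (gout g)"
      using GiC IU by (auto simp: merge_def Go_def)
    have 3: "map ?M (gin g) = map m1 (gin g)"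
      using dis IU by (auto simp: merge_def Gi_def)
    have 4: "(\<lambda>w. if w \<in> Cw (g # gs) then False else ?M w) =
       merge Gi m1 (merge Go (\<lambda>_. False) (\<lambda>w. if w \<in> C' then False else merge I' m l w))"
      using GiC IU dis unfolding CC by (auto simp: merge_def fun_eq_iff)
    show "gprod gs (merge I' m l) *
      (gmat g (map (\<lambda>w. if w \<in> C' then False else merge I' m l w) (gout g)) (map m1 (gin g)) *
       psi (merge Gi m1 (merge Go (\<lambda>_. False) (\<lambda>w. if w \<in> C' then False else merge I' m l w)))) =
      gprod (g # gs) ?M * psi (\<lambda>w. if w \<in> Cw (g # gs) then False else ?M w)"
    proof -
      have g5: "gprod (g # gs) ?M = gmat g (map ?M (gout g)) (map ?M (gin g)) * gprod gs ?M"
        by (simp add: gprod_def)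
      show ?thesis unfolding g5 1 2 3 4 by (simp only: mult_ac)
    qed
  qed
  also have "\<dots> = (\<Sum>m\<in>Lab I. gprod (g # gs) (merge I m l) *
        psi (\<lambda>w. if w \<in> Cw (g # gs) then False else merge I m l w))"
    unfolding IU by (rule sumLab_Un[symmetric]) (use finI' finGi dis in auto)
  finally show ?case by (simp add: I_def)
qed



lemma prod_ind: "finite A \<Longrightarrow> (\<Prod>i\<in>A. (if P i then 1 else 0 :: complex)) = (if \<forall>i\<in>A. P i then 1 else 0)"
  by (induction A rule: finite_induct) auto

lemma gprod_nth: "gprod gs c = (\<Prod>j<length gs. gmat (gs ! j) (map c (gout (gs ! j))) (map c (gin (gs ! j))))"
  unfolding gprod_def prod.list_conv_set_nth by (simp add: atLeast0LessThan)

lemma cnj_ind: "cnj (if P then 1 else 0) = (if P then 1 else 0)"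
  by simp

theorem lemma4:
  fixes Q :: opcirc and x :: "bool list"
  assumes "wf_circ Q" and "length x = length (cin Q)"
  shows "tc_value (TQ Q x) = complex_of_real (proj0_norm_sq Q x)"
proof -
  define gs where "gs = cgates Q"
  define L where "L = set (cin Q)"
  define F where "F = set (cout Q)"
  define a where "a = cans Q"
  define n where "n = length (cin Q)"
  define ng where "ng = length gs"
  define W where "W = L \<union> Cw gs"
  define I where "I = W - F"
  define W2 where "W2 = I \<union> {a}"
  define A where "A c = gprod gs c * (\<Prod>i<n. if c (cin Q ! i) = x ! i then 1 else 0)" for c
  have dcin: "distinct (cin Q)" and dcout: "distinct (cout Q)" and aF: "a \<in> F"
    and wfg: "wf_gates L L gs F"
    using assms(1) by (auto simp: wf_circ_def L_def F_def a_def gs_def)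
  from wf_facts[OF wfg] have CL: "Cw gs \<inter> L = {}" and FW: "F \<subseteq> W"
    and ginW: "\<forall>g\<in>set gs. set (gin g) \<subseteq> W" by (auto simp: W_def)
  have goutW: "\<forall>g\<in>set gs. set (gout g) \<subseteq> W" by (auto simp: W_def Cw_def)
  have finW: "finite W" by (simp add: W_def L_def Cw_def)
  have finF: "finite F" "finite I" "finite W2" using finW FW
    by (auto simp: F_def I_def W2_def)
  have aI: "a \<notin> I" using aF by (simp add: I_def)
  have allw: "all_wires Q = W" by (simp add: all_wires_def W_def L_def Cw_def gs_def)
  have xlen: "length x = n" using assms(2) by (simp add: n_def)
  have run: "run_circ Q x ov = (\<Sum>m\<in>Lab I. A (merge I m ov))" if oF: "ov \<in> Lab F" for ov
  proof -
    obtain mx where mx: "x = map mx (cin Q)" using list_as_map[OF dcin assms(2)] by blast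
    have ups: "upds (\<lambda>_. False) (cin Q) x = merge L mx (\<lambda>_. False)"
      unfolding mx L_def by (rule upds_map[OF dcin])
    have "run_circ Q x ov = (\<Sum>m\<in>Lab I. gprod gs (merge I m ov) *
        init_state Q x (\<lambda>w. if w \<in> Cw gs then False else merge I m ov w))"
      unfolding run_circ_def gs_def[symmetric]
      using path_sum[OF wfg order_refl, of "init_state Q x" ov] by (simp add: L_def W_def I_def)
    also have "\<dots> = (\<Sum>m\<in>Lab I. A (merge I m ov))"
    proof (rule sum.cong[OF refl])
      fix m
      let ?c = "merge I m ov"
      have "((\<lambda>w. if w \<in> Cw gs then False else ?c w) = merge L mx (\<lambda>_. False)) \<longleftrightarrow> (\<forall>w\<in>L. ?c w = mx w)"
      proof
        assume h: "(\<lambda>w. if w \<in> Cw gs then False else ?c w) = merge L mx (\<lambda>_. False)"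
        show "\<forall>w\<in>L. ?c w = mx w"
        proof
          fix w
          assume wL: "w \<in> L"
          then have "w \<notin> Cw gs" using CL by blast
          with fun_cong[OF h, of w] have "?c w = merge L mx (\<lambda>_. False) w" by simp
          then show "?c w = mx w" using wL by (simp add: merge_def)
        qed
      next
        assume h: "\<forall>w\<in>L. ?c w = mx w"
        show "(\<lambda>w. if w \<in> Cw gs then False else ?c w) = merge L mx (\<lambda>_. False)"
        proof
          fix w
          show "(if w \<in> Cw gs then False else ?c w) = merge L mx (\<lambda>_. False) w"
            using h CL oF FW by (auto simp: merge_def I_def W_def Lab_def)
        qed
      qed
      also have "\<dots> \<longleftrightarrow> (\<forall>i\<in>{..<n}. ?c (cin Q ! i) = x ! i)"
        unfolding L_def n_def mx by (auto simp: in_set_conv_nth) (metis nth_mem)+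
      finally have e: "((\<lambda>w. if w \<in> Cw gs then False else ?c w) = merge L mx (\<lambda>_. False)) \<longleftrightarrow> (\<forall>i\<in>{..<n}. ?c (cin Q ! i) = x ! i)" .
      show "gprod gs ?c * init_state Q x (\<lambda>w. if w \<in> Cw gs then False else ?c w) = A ?c"
        unfolding A_def init_state_def ups using e by (simp add: prod_ind)
    qed
    finally show ?thesis .
  qed
  have proj: "proj0_norm_sq Q x = (\<Sum>ov\<in>Lab F. if ov a then 0 else (cmod (run_circ Q x ov))\<^sup>2)"
  proof -
    have "proj0_norm_sq Q x = (\<Sum>ov\<in>Lab F. if upds (\<lambda>_. False) (cout Q) (map ov (cout Q)) (cans Q) then 0
        else (cmod (run_circ Q x (upds (\<lambda>_. False) (cout Q) (map ov (cout Q)))))\<^sup>2)"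
      unfolding proj0_norm_sq_def by (subst sum_lists_Lab[OF dcout]) (simp add: F_def)
    also have "\<dots> = (\<Sum>ov\<in>Lab F. if ov a then 0 else (cmod (run_circ Q x ov))\<^sup>2)"
    proof (rule sum.cong[OF refl])
      fix ov assume "ov \<in> Lab F"
      then have "upds (\<lambda>_. False) (cout Q) (map ov (cout Q)) = ov"
        by (auto simp: upds_map[OF dcout] merge_def F_def Lab_def fun_eq_iff)
      then show "(if upds (\<lambda>_. False) (cout Q) (map ov (cout Q)) (cans Q) then 0
        else (cmod (run_circ Q x (upds (\<lambda>_. False) (cout Q) (map ov (cout Q)))))\<^sup>2) =
        (if ov a then 0 else (cmod (run_circ Q x ov))\<^sup>2)" by (simp add: a_def)
    qed
    finally show ?thesis .
  qed
  define c2 where "c2 l1 l2 = (\<lambda>w. if w \<in> F \<and> w \<noteq> a then l1 w else l2 (w::nat))" for l1 l2 :: "nat \<Rightarrow> bool"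
  define E where "E = Pair False ` W \<union> Pair True ` W2"
  have tE: "tedges (TQ Q x) = E"
  proof -
    have "e2 Q ` W = Pair False ` (F - {a}) \<union> Pair True ` W2"
      using FW aF by (auto simp: e2_def F_def a_def W2_def I_def image_iff)
    then show ?thesis using FW by (auto simp: TQ_def allw E_def)
  qed
  define phi where "phi l1 l2 = (\<lambda>e. if e \<in> E then (if fst e then l2 (snd e) else l1 (snd e)) else undefined)"
    for l1 l2 :: "nat \<Rightarrow> bool"
  have W2W: "W2 \<subseteq> W" using aF FW by (auto simp: W2_def I_def)
  have bij: "bij_betw (\<lambda>(l1, l2). phi l1 l2) (Lab W \<times> Lab W2) (PiE E (\<lambda>_. UNIV :: bool set))"
  proof (rule bij_betwI')
    fix p q assume p: "p \<in> Lab W \<times> Lab W2" and q: "q \<in> Lab W \<times> Lab W2"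
    show "((case p of (l1, l2) \<Rightarrow> phi l1 l2) = (case q of (l1, l2) \<Rightarrow> phi l1 l2)) = (p = q)"
    proof
      assume h: "(case p of (l1, l2) \<Rightarrow> phi l1 l2) = (case q of (l1, l2) \<Rightarrow> phi l1 l2)"
      obtain p1 p2 q1 q2 where pq: "p = (p1, p2)" "q = (q1, q2)" by (cases p, cases q) auto
      have "p1 w = q1 w" for w
      proof (cases "w \<in> W")
        case True
        then have "(False, w) \<in> E" by (simp add: E_def)
        then show ?thesis using fun_cong[OF h, of "(False, w)"] by (simp add: pq phi_def)
      next
        case False
        then show ?thesis using p q by (auto simp: pq Lab_def)
      qed
      moreover have "p2 w = q2 w" for w
      proof (cases "w \<in> W2")
        case True
        then have "(True, w) \<in> E" by (simp add: E_def)
        then show ?thesis using fun_cong[OF h, of "(True, w)"] by (simp add: pq phi_def)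
      next
        case False
        then show ?thesis using p q by (auto simp: pq Lab_def)
      qed
      ultimately show "p = q" by (auto simp: pq fun_eq_iff)
    qed simp
  next
    fix p assume "p \<in> Lab W \<times> Lab W2"
    show "(case p of (l1, l2) \<Rightarrow> phi l1 l2) \<in> PiE E (\<lambda>_. UNIV :: bool set)"
      by (cases p) (auto simp: phi_def PiE_def extensional_def)
  next
    fix l assume l: "l \<in> PiE E (\<lambda>_. UNIV :: bool set)"
    show "\<exists>p\<in>Lab W \<times> Lab W2. l = (case p of (l1, l2) \<Rightarrow> phi l1 l2)"
    proof (intro bexI[of _ "(\<lambda>w. w \<in> W \<and> l (False, w), \<lambda>w. w \<in> W2 \<and> l (True, w))"])
      show "(\<lambda>w. w \<in> W \<and> l (False, w), \<lambda>w. w \<in> W2 \<and> l (True, w)) \<in> Lab W \<times> Lab W2"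
        by (auto simp: Lab_def)
      show "l = (case (\<lambda>w. w \<in> W \<and> l (False, w), \<lambda>w. w \<in> W2 \<and> l (True, w)) of (l1, l2) \<Rightarrow> phi l1 l2)"
      proof
        fix e :: "bool \<times> nat"
        obtain b w where e: "e = (b, w)" by (cases e)
        show "l e = (case (\<lambda>w. w \<in> W \<and> l (False, w), \<lambda>w. w \<in> W2 \<and> l (True, w)) of (l1, l2) \<Rightarrow> phi l1 l2) e"
        proof (cases "e \<in> E")
          case True
          then show ?thesis by (cases b) (auto simp: e phi_def E_def)
        next
          case False
          then have "l e = undefined" using l by (auto simp: PiE_def extensional_def e)
          then show ?thesis using False by (simp add: phi_def)
        qed
      qed
    qed
  qed
  have phiF: "phi l1 l2 (False, w) = l1 w" if "w \<in> W" for l1 l2 w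
    using that by (simp add: phi_def E_def)
  have phie2: "phi l1 l2 (e2 Q w) = c2 l1 l2 w" if "w \<in> W" for l1 l2 w
  proof (cases "w \<in> F \<and> w \<noteq> a")
    case True
    then show ?thesis using that by (simp add: e2_def F_def a_def phiF c2_def)
  next
    case False
    then have "w \<in> W2" using that by (auto simp: W2_def I_def)
    then show ?thesis using False by (auto simp: e2_def F_def a_def phi_def c2_def E_def)
  qed
  define P where "P l = (\<Prod>v\<in>tverts (TQ Q x). tten (TQ Q x) v (map l (tinc (TQ Q x) v)))"
    for l :: "bool \<times> nat \<Rightarrow> bool"
  have verts: "tverts (TQ Q x) = (((GateV False ` {..<ng} \<union> GateV True ` {..<ng}) \<union> {ProjV}) \<union> InV ` {..<n}) \<union> OutV ` {..<n}"
    by (auto simp: TQ_def ng_def gs_def n_def)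
  have Pval: "P (phi l1 l2) = A l1 * cnj (A (c2 l1 l2)) * (if \<not> l1 a \<and> \<not> l2 a then 1 else 0)" for l1 l2
  proof -
    let ?l = "phi l1 l2"
    let ?f = "\<lambda>v. tten (TQ Q x) v (map ?l (tinc (TQ Q x) v))"
    have mapF: "map (?l \<circ> Pair False) ws = map l1 ws" if "set ws \<subseteq> W" for ws
      using that by (induction ws) (simp_all add: phiF)
    have mape2: "map (?l \<circ> e2 Q) ws = map (c2 l1 l2) ws" if "set ws \<subseteq> W" for ws
      using that by (induction ws) (simp_all add: phie2)
    have gsj: "gs ! j \<in> set gs" if "j < ng" for j using that by (simp add: ng_def)
    have f1: "?f (GateV False j) = gmat (gs ! j) (map l1 (gout (gs ! j))) (map l1 (gin (gs ! j)))" if "j < ng" for j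
    proof -
      have e: "map (?l \<circ> Pair False) (gin (gs ! j)) = map l1 (gin (gs ! j))"
           "map (?l \<circ> Pair False) (gout (gs ! j)) = map l1 (gout (gs ! j))"
        by (rule mapF, use ginW goutW gsj[OF that] in blast)+
      show ?thesis by (simp add: TQ_def gs_def[symmetric] Let_def e)
    qed
    have f2: "?f (GateV True j) = cnj (gmat (gs ! j) (map (c2 l1 l2) (gout (gs ! j))) (map (c2 l1 l2) (gin (gs ! j))))" if "j < ng" for j
    proof -
      have e: "map (?l \<circ> e2 Q) (gin (gs ! j)) = map (c2 l1 l2) (gin (gs ! j))"
           "map (?l \<circ> e2 Q) (gout (gs ! j)) = map (c2 l1 l2) (gout (gs ! j))"
        by (rule mape2, use ginW goutW gsj[OF that] in blast)+
      show ?thesis by (simp add: TQ_def gs_def[symmetric] Let_def e)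
    qed
    have aW: "a \<in> W" "a \<in> W2" using aF FW by (auto simp: W2_def)
    have f3: "?f ProjV = (if \<not> l1 a \<and> \<not> l2 a then 1 else 0)"
      using aW by (simp add: TQ_def a_def[symmetric] phiF phi_def E_def)
    have cinW: "cin Q ! i \<in> W" if "i < n" for i using that by (simp add: W_def L_def n_def)
    have f4: "?f (InV i) = (if l1 (cin Q ! i) = x ! i then 1 else 0)" if "i < n" for i
      using cinW[OF that] by (simp add: TQ_def phiF)
    have f5: "?f (OutV i) = (if c2 l1 l2 (cin Q ! i) = x ! i then 1 else 0)" if "i < n" for i
      using cinW[OF that] by (simp add: TQ_def phie2)
    have "P ?l = (\<Prod>v\<in>GateV False ` {..<ng}. ?f v) * (\<Prod>v\<in>GateV True ` {..<ng}. ?f v) * ?f ProjV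
       * (\<Prod>v\<in>InV ` {..<n}. ?f v) * (\<Prod>v\<in>OutV ` {..<n}. ?f v)"
    proof -
      let ?GF = "GateV False ` {..<ng}" and ?GT = "GateV True ` {..<ng}"
        and ?IN = "InV ` {..<n}" and ?OUT = "OutV ` {..<n}"
      have s1: "prod ?f (((?GF \<union> ?GT) \<union> {ProjV}) \<union> ?IN \<union> ?OUT) = prod ?f (((?GF \<union> ?GT) \<union> {ProjV}) \<union> ?IN) * prod ?f ?OUT"
        by (rule prod.union_disjoint) auto
      have s2: "prod ?f (((?GF \<union> ?GT) \<union> {ProjV}) \<union> ?IN) = prod ?f ((?GF \<union> ?GT) \<union> {ProjV}) * prod ?f ?IN"
        by (rule prod.union_disjoint) auto
      have s3: "prod ?f ((?GF \<union> ?GT) \<union> {ProjV}) = prod ?f (?GF \<union> ?GT) * prod ?f {ProjV}"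
        by (rule prod.union_disjoint) auto
      have s4: "prod ?f (?GF \<union> ?GT) = prod ?f ?GF * prod ?f ?GT"
        by (rule prod.union_disjoint) auto
      show ?thesis unfolding P_def verts s1 s2 s3 s4 by simp
    qed
    also have "\<dots> = (\<Prod>j<ng. ?f (GateV False j)) * (\<Prod>j<ng. ?f (GateV True j)) * ?f ProjV
       * (\<Prod>i<n. ?f (InV i)) * (\<Prod>i<n. ?f (OutV i))"
      by (simp add: prod.reindex inj_on_def)
    also have "\<dots> = gprod gs l1 * cnj (gprod gs (c2 l1 l2)) * (if \<not> l1 a \<and> \<not> l2 a then 1 else 0)
       * (\<Prod>i<n. if l1 (cin Q ! i) = x ! i then 1 else 0) * cnj (\<Prod>i<n. if c2 l1 l2 (cin Q ! i) = x ! i then 1 else 0)"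
      by (simp add: f1 f2 f3 f4 f5 gprod_nth cnj_prod ng_def cnj_ind)
    also have "\<dots> = A l1 * cnj (A (c2 l1 l2)) * (if \<not> l1 a \<and> \<not> l2 a then 1 else 0)"
      by (simp add: A_def mult_ac cnj_prod cnj_ind)
    finally show ?thesis .
  qed
  have tc: "tc_value (TQ Q x) = (\<Sum>l1\<in>Lab W. \<Sum>l2\<in>Lab W2. A l1 * cnj (A (c2 l1 l2)) * (if \<not> l1 a \<and> \<not> l2 a then 1 else 0))"
  proof -
    have "tc_value (TQ Q x) = (\<Sum>l\<in>PiE E (\<lambda>_. UNIV :: bool set). P l)"
      by (simp add: tc_value_def tE P_def)
    also have "\<dots> = (\<Sum>p\<in>Lab W \<times> Lab W2. P ((\<lambda>(l1, l2). phi l1 l2) p))"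
      by (rule sum.reindex_bij_betw[OF bij, symmetric])
    also have "\<dots> = (\<Sum>l1\<in>Lab W. \<Sum>l2\<in>Lab W2. P (phi l1 l2))"
      by (simp add: sum.cartesian_product split_def)
    finally show ?thesis by (simp add: Pval)
  qed
  have IF: "W = I \<union> F" "I \<inter> F = {}" using FW by (auto simp: I_def)
  have inner: "(\<Sum>l2\<in>Lab W2. A (merge I m ov) * cnj (A (c2 (merge I m ov) l2)) *
        (if \<not> merge I m ov a \<and> \<not> l2 a then 1 else 0)) =
      (\<Sum>m2\<in>Lab I. if ov a then 0 else A (merge I m ov) * cnj (A (merge I m2 ov)))"
    if ovF: "ov \<in> Lab F" for m ov
  proof -
    have "(\<Sum>l2\<in>Lab W2. A (merge I m ov) * cnj (A (c2 (merge I m ov) l2)) *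
        (if \<not> merge I m ov a \<and> \<not> l2 a then 1 else 0)) =
      (\<Sum>m2\<in>Lab I. \<Sum>p\<in>Lab {a}. A (merge I m ov) * cnj (A (c2 (merge I m ov) (merge I m2 p))) *
        (if \<not> merge I m ov a \<and> \<not> merge I m2 p a then 1 else 0))"
      unfolding W2_def by (rule sumLab_Un) (use finF aI in auto)
    also have "\<dots> = (\<Sum>m2\<in>Lab I. if ov a then 0 else A (merge I m ov) * cnj (A (merge I m2 ov)))"
    proof (rule sum.cong[OF refl])
      fix m2
      have ma: "merge I m ov a = ov a" "merge I m2 (\<lambda>_. False) a = False"
        "merge I m2 ((\<lambda>_. False)(a := True)) a = True" using aI by (auto simp: merge_def)
      have cc: "c2 (merge I m ov) (merge I m2 (\<lambda>_. False)) = merge I m2 ov" if "\<not> ov a"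
        using that ovF IF(2) by (auto simp: c2_def merge_def Lab_def fun_eq_iff)
      show "(\<Sum>p\<in>Lab {a}. A (merge I m ov) * cnj (A (c2 (merge I m ov) (merge I m2 p))) *
        (if \<not> merge I m ov a \<and> \<not> merge I m2 p a then 1 else 0)) =
        (if ov a then 0 else A (merge I m ov) * cnj (A (merge I m2 ov)))"
        unfolding sumLab_single using cc by (simp add: ma)
    qed
    finally show ?thesis .
  qed
  have "tc_value (TQ Q x) = (\<Sum>m\<in>Lab I. \<Sum>ov\<in>Lab F. \<Sum>l2\<in>Lab W2. A (merge I m ov) * cnj (A (c2 (merge I m ov) l2)) *
        (if \<not> merge I m ov a \<and> \<not> l2 a then 1 else 0))"
    unfolding tc IF(1) by (rule sumLab_Un) (use finF IF in auto)
  also have "\<dots> = (\<Sum>m\<in>Lab I. \<Sum>ov\<in>Lab F. \<Sum>m2\<in>Lab I. if ov a then 0 else A (merge I m ov) * cnj (A (merge I m2 ov)))"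
    by (intro sum.cong refl inner)
  also have "\<dots> = (\<Sum>ov\<in>Lab F. \<Sum>m\<in>Lab I. \<Sum>m2\<in>Lab I. if ov a then 0 else A (merge I m ov) * cnj (A (merge I m2 ov)))"
    by (rule sum.swap)
  also have "\<dots> = (\<Sum>ov\<in>Lab F. if ov a then 0 else run_circ Q x ov * cnj (run_circ Q x ov))"
  proof (rule sum.cong[OF refl])
    fix ov assume ovF: "ov \<in> Lab F"
    show "(\<Sum>m\<in>Lab I. \<Sum>m2\<in>Lab I. if ov a then 0 else A (merge I m ov) * cnj (A (merge I m2 ov))) =
      (if ov a then 0 else run_circ Q x ov * cnj (run_circ Q x ov))"
      unfolding run[OF ovF] by (simp add: sum_product cnj_sum)
  qed
  also have "\<dots> = complex_of_real (proj0_norm_sq Q x)"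
    unfolding proj of_real_sum by (rule sum.cong) (auto simp: complex_norm_square[symmetric] simp del: of_real_power)
  finally show ?thesis .
qed

end
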